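(* For every $c\in(0,1]$ and Lebesgue-almost every irrational $\alpha\in(0,1)$, setting $T_n:=S(\alpha,n,\lceil cn\rceil)^{1/\lceil cn\rceil}$, we have $|T_n-T_{n+1}|\to0$ as $n\to\infty$; more precisely $|T_n-T_{n+1}|=O\!\left(\frac{\log n}{n}\right)$.
   Context: Every irrational $\alpha\in(0,1)$ has a unique continued fraction expansion $\alpha = 1/(a_1(\alpha)+1/(a_2(\alpha)+\cdots))$ with digits $a_i(\alpha)\in\mathbb{N}_{\ge1}$. For $1\le k\le n$ integers, \[ S(\alpha,n,k) := \binom{n}{k}^{-1}\sum_{1\le i_1<\cdots<i_k\le n} a_{i_1}(\alpha)\cdots a_{i_k}(\alpha). \] *)

theory Defs
  imports "HOL-Analysis.Analysis" "HOL-Library.Landau_Symbols"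
begin

definition gauss_map :: "real \<Rightarrow> real" where
  "gauss_map x = frac (1 / x)"

definition cf_digit :: "real \<Rightarrow> nat \<Rightarrow> nat" where
  "cf_digit \<alpha> i = nat \<lfloor>1 / ((gauss_map ^^ (i - 1)) \<alpha>)\<rfloor>"

definition S_avg :: "real \<Rightarrow> nat \<Rightarrow> nat \<Rightarrow> real" where
  "S_avg \<alpha> n k = (\<Sum>I\<in>{I. I \<subseteq> {1..n} \<and> card I = k}. \<Prod>i\<in>I. real (cf_digit \<alpha> i))
                   / real (n choose k)"

end

theory Submission
  imports Defs
begin


definition esym :: "(nat \<Rightarrow> real) \<Rightarrow> nat \<Rightarrow> nat \<Rightarrow> real" where
  "esym a n k = (\<Sum>I\<in>{I. I \<subseteq> {1..n} \<and> card I = k}. \<Prod>i\<in>I. a i)"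

lemma esym_0_right[simp]: "esym a n 0 = 1"
proof -
  have "{I. I \<subseteq> {1..n} \<and> card I = 0} = {{}}"
  proof (intro equalityI subsetI)
    fix I assume "I \<in> {I. I \<subseteq> {1..n} \<and> card I = 0}"
    then have "finite I" "card I = 0" using finite_subset[of I "{1..n}"] by auto
    then show "I \<in> {{}}" by simp
  qed auto
  then show ?thesis by (simp add: esym_def)
qed

lemma esym_0_left: "esym a 0 (Suc k) = 0"
proof -
  have "{I. I \<subseteq> {1..(0::nat)} \<and> card I = Suc k} = {}" by auto
  then show ?thesis by (simp add: esym_def)
qed

lemma esym_Suc: "esym a (Suc n) (Suc k) = esym a n (Suc k) + a (Suc n) * esym a n k"
proof -
  let ?A = "{I. I \<subseteq> {1..n} \<and> card I = Suc k}"
  let ?B = "{I. I \<subseteq> {1..n} \<and> card I = k}"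
  have fin: "finite {I. I \<subseteq> {1..m}}" for m :: nat by simp
  have finA: "finite ?A" by (rule finite_subset[OF _ fin[of n]]) auto
  have finB: "finite ?B" by (rule finite_subset[OF _ fin[of n]]) auto
  have eq: "{I. I \<subseteq> {1..Suc n} \<and> card I = Suc k} = ?A \<union> insert (Suc n) ` ?B"
  proof (intro equalityI subsetI)
    fix I assume I: "I \<in> {I. I \<subseteq> {1..Suc n} \<and> card I = Suc k}"
    show "I \<in> ?A \<union> insert (Suc n) ` ?B"
    proof (cases "Suc n \<in> I")
      case True
      have fI: "finite I" using I finite_subset[of I "{1..Suc n}"] by auto
      have "I - {Suc n} \<in> ?B" using I True fI by (auto simp: card_Diff_singleton)
      moreover have "I = insert (Suc n) (I - {Suc n})" using True by auto
      ultimately show ?thesis by blast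
    next
      case False
      then have "I \<subseteq> {1..n}" using I by (auto simp: le_Suc_eq)
      then show ?thesis using I by auto
    qed
  next
    fix I assume "I \<in> ?A \<union> insert (Suc n) ` ?B"
    then show "I \<in> {I. I \<subseteq> {1..Suc n} \<and> card I = Suc k}"
    proof
      assume "I \<in> ?A" then show ?thesis by auto
    next
      assume "I \<in> insert (Suc n) ` ?B"
      then obtain J where J: "J \<in> ?B" "I = insert (Suc n) J" by auto
      have fJ: "finite J" using J finite_subset[of J "{1..n}"] by auto
      have "Suc n \<notin> J" using J by auto
      then show ?thesis using J fJ by auto
    qed
  qed
  have disj: "?A \<inter> insert (Suc n) ` ?B = {}" by auto
  have inj: "inj_on (insert (Suc n)) ?B"
  proof (rule inj_onI)
    fix x y assume xy: "x \<in> ?B" "y \<in> ?B" "insert (Suc n) x = insert (Suc n) y"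
    have "Suc n \<notin> x" "Suc n \<notin> y" using xy by auto
    then show "x = y" using xy(3) by (metis Diff_insert_absorb)
  qed
  have "esym a (Suc n) (Suc k) = (\<Sum>I\<in>?A. \<Prod>i\<in>I. a i) + (\<Sum>I\<in>insert (Suc n) ` ?B. \<Prod>i\<in>I. a i)"
    unfolding esym_def eq by (rule sum.union_disjoint) (use finA finB disj in auto)
  also have "(\<Sum>I\<in>insert (Suc n) ` ?B. \<Prod>i\<in>I. a i) = (\<Sum>J\<in>?B. \<Prod>i\<in>insert (Suc n) J. a i)"
    by (rule sum.reindex_cong[OF inj refl refl])
  also have "\<dots> = (\<Sum>J\<in>?B. a (Suc n) * (\<Prod>i\<in>J. a i))"
  proof (rule sum.cong[OF refl])
    fix J assume J: "J \<in> ?B"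
    have fJ: "finite J" using J finite_subset[of J "{1..n}"] by auto
    have "Suc n \<notin> J" using J by auto
    then show "(\<Prod>i\<in>insert (Suc n) J. a i) = a (Suc n) * (\<Prod>i\<in>J. a i)" using fJ by simp
  qed
  also have "\<dots> = a (Suc n) * esym a n k" by (simp add: esym_def sum_distrib_left)
  finally show ?thesis by (simp add: esym_def)
qed

lemma esym_nonneg: "(\<And>i. 0 \<le> a i) \<Longrightarrow> 0 \<le> esym a n k"
  unfolding esym_def by (intro sum_nonneg prod_nonneg) auto

lemma esym_nonneg':
  assumes "\<And>i. i \<in> {1..n} \<Longrightarrow> 1 \<le> a i"
  shows "0 \<le> esym a n k"
  unfolding esym_def
proof (intro sum_nonneg prod_nonneg)
  fix I i assume "I \<in> {I. I \<subseteq> {1..n} \<and> card I = k}" "i \<in> I"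
  then have "1 \<le> a i" using assms by auto
  then show "0 \<le> a i" by simp
qed

lemma esym_ge_binom:
  assumes "\<And>i. i \<in> {1..n} \<Longrightarrow> 1 \<le> a i"
  shows "real (n choose k) \<le> esym a n k"
proof -
  let ?A = "{I. I \<subseteq> {1..n} \<and> card I = k}"
  have "real (n choose k) = (\<Sum>I\<in>?A. (1::real))" using n_subsets[of "{1..n}" k] by simp
  also have "\<dots> \<le> esym a n k" unfolding esym_def
    by (intro sum_mono prod_ge_1) (use assms in auto)
  finally show ?thesis .
qed

lemma esym_le_prod:
  assumes "\<And>i. 0 \<le> a i"
  shows "esym a n k \<le> (\<Prod>i\<in>{1..n}. 1 + a i)"
proof (induction n arbitrary: k)
  case 0 then show ?case by (cases k) (auto simp: esym_0_left)
next
  case (Suc n)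
  have p: "(\<Prod>i\<in>{1..Suc n}. 1 + a i) = (1 + a (Suc n)) * (\<Prod>i\<in>{1..n}. 1 + a i)"
    by (simp add: atLeastAtMostSuc_conv mult.commute)
  have P0: "1 \<le> (\<Prod>i\<in>{1..n}. 1 + a i)" by (intro prod_ge_1) (use assms in auto)
  show ?case
  proof (cases k)
    case 0
    have "1 \<le> 1 + a (Suc n)" using assms[of "Suc n"] by simp
    then show ?thesis using P0 unfolding p 0 esym_0_right by (rule mult_ge1_I)
  next
    case (Suc j)
    have "esym a (Suc n) k = esym a n (Suc j) + a (Suc n) * esym a n j" by (simp add: Suc esym_Suc)
    also have "\<dots> \<le> (\<Prod>i\<in>{1..n}. 1 + a i) + a (Suc n) * (\<Prod>i\<in>{1..n}. 1 + a i)"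
      by (intro add_mono mult_left_mono Suc.IH assms)
    also have "\<dots> = (1 + a (Suc n)) * (\<Prod>i\<in>{1..n}. 1 + a i)" by algebra
    finally show ?thesis unfolding p .
  qed
qed

lemma esym_I1:
  assumes "\<And>i. i \<in> {1..n} \<Longrightarrow> 1 \<le> a i"
  shows "(real n - real k) * esym a n k \<le> (real k + 1) * esym a n (Suc k)"
  using assms
proof (induction n arbitrary: k)
  case 0 then show ?case by (cases k) (auto simp: esym_0_left)
next
  case (Suc n)
  have a1: "1 \<le> a (Suc n)" using Suc.prems by auto
  have h: "\<And>i. i \<in> {1..n} \<Longrightarrow> 1 \<le> a i" using Suc.prems by auto
  have nn: "\<And>j. 0 \<le> esym a n j" by (rule esym_nonneg'[OF h])
  show ?case
  proof (cases k)
    case 0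
    have "real n \<le> esym a n 1" using Suc.IH[OF h, of 0] by simp
    moreover have "esym a (Suc n) 1 = esym a n 1 + a (Suc n)" using esym_Suc[of a n 0] by simp
    ultimately show ?thesis using 0 a1 by simp
  next
    case (Suc j)
    have I1: "(real n - real (Suc j)) * esym a n (Suc j) \<le> (real (Suc j) + 1) * esym a n (Suc (Suc j))"
      by (rule Suc.IH[OF h])
    have I0: "(real n - real j) * esym a n j \<le> (real j + 1) * esym a n (Suc j)"
      by (rule Suc.IH[OF h])
    have I0': "a (Suc n) * ((real n - real j) * esym a n j) \<le> a (Suc n) * ((real j + 1) * esym a n (Suc j))"
      using I0 a1 by (intro mult_left_mono) auto
    have e: "esym a n (Suc j) \<le> a (Suc n) * esym a n (Suc j)"
      using mult_right_mono[OF a1 nn[of "Suc j"]] by simp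
    have l: "(real (Suc n) - real k) * esym a (Suc n) k = (real n - real (Suc j)) * esym a n (Suc j) + esym a n (Suc j) + a (Suc n) * ((real n - real j) * esym a n j)"
      unfolding Suc esym_Suc of_nat_Suc by algebra
    have r: "(real k + 1) * esym a (Suc n) (Suc k) = (real (Suc j) + 1) * esym a n (Suc (Suc j)) + a (Suc n) * ((real j + 1) * esym a n (Suc j)) + a (Suc n) * esym a n (Suc j)"
      unfolding Suc esym_Suc of_nat_Suc by algebra
    show ?thesis unfolding l r using I1 I0' e by linarith
  qed
qed

lemma esym_I2:
  assumes "\<And>i. i \<in> {1..n} \<Longrightarrow> 1 \<le> a i" "\<And>i. i \<in> {1..n} \<Longrightarrow> a i \<le> M"
  shows "(real k + 1) * esym a n (Suc k) \<le> M * (real n - real k) * esym a n k"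
  using assms
proof (induction n arbitrary: k)
  case 0 then show ?case by (cases k) (auto simp: esym_0_left)
next
  case (Suc n)
  have a1: "1 \<le> a (Suc n)" "a (Suc n) \<le> M" using Suc.prems by auto
  have h: "\<And>i. i \<in> {1..n} \<Longrightarrow> 1 \<le> a i" "\<And>i. i \<in> {1..n} \<Longrightarrow> a i \<le> M" using Suc.prems by auto
  have nn: "\<And>j. 0 \<le> esym a n j" by (rule esym_nonneg'[OF h(1)])
  show ?case
  proof (cases k)
    case 0
    have "esym a n 1 \<le> M * real n" using Suc.IH[OF h, of 0] by simp
    moreover have "esym a (Suc n) 1 = esym a n 1 + a (Suc n)" using esym_Suc[of a n 0] by simp
    moreover have "M * real (Suc n) = M * real n + M" by (simp add: distrib_left)
    ultimately show ?thesis using 0 a1 by simp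
  next
    case (Suc j)
    have I1: "(real (Suc j) + 1) * esym a n (Suc (Suc j)) \<le> M * (real n - real (Suc j)) * esym a n (Suc j)"
      by (rule Suc.IH[OF h])
    have I0: "(real j + 1) * esym a n (Suc j) \<le> M * (real n - real j) * esym a n j"
      by (rule Suc.IH[OF h])
    have I0': "a (Suc n) * ((real j + 1) * esym a n (Suc j)) \<le> a (Suc n) * (M * (real n - real j) * esym a n j)"
      using I0 a1 by (intro mult_left_mono) auto
    have e: "a (Suc n) * esym a n (Suc j) \<le> M * esym a n (Suc j)"
      using mult_right_mono[OF a1(2) nn[of "Suc j"]] .
    have l: "(real k + 1) * esym a (Suc n) (Suc k) = (real (Suc j) + 1) * esym a n (Suc (Suc j)) + a (Suc n) * ((real j + 1) * esym a n (Suc j)) + a (Suc n) * esym a n (Suc j)"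
      unfolding Suc esym_Suc of_nat_Suc by algebra
    have r: "M * (real (Suc n) - real k) * esym a (Suc n) k = M * (real n - real (Suc j)) * esym a n (Suc j) + M * esym a n (Suc j) + a (Suc n) * (M * (real n - real j) * esym a n j)"
      unfolding Suc esym_Suc of_nat_Suc by algebra
    show ?thesis unfolding l r using I1 I0' e by linarith
  qed
qed


lemma exp_diff_le:
  fixes x y L :: real
  assumes "x \<le> L" "y \<le> L"
  shows "\<bar>exp x - exp y\<bar> \<le> exp L * \<bar>x - y\<bar>"
proof -
  have key: "exp u - exp v \<le> exp L * (u - v)" if "v \<le> u" "u \<le> L" for u v :: real
  proof -
    have "1 + (v - u) \<le> exp (v - u)" by (rule exp_ge_add_one_self)
    then have "exp u * (1 + (v - u)) \<le> exp u * exp (v - u)" by (intro mult_left_mono) auto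
    also have "exp u * exp (v - u) = exp v" by (simp add: exp_add[symmetric])
    finally have "exp u - exp v \<le> exp u * (u - v)" by (simp add: algebra_simps)
    also have "\<dots> \<le> exp L * (u - v)" using that by (intro mult_right_mono) auto
    finally show ?thesis .
  qed
  show ?thesis
  proof (cases "y \<le> x")
    case True then show ?thesis using key[of y x] assms by (simp add: abs_if)
  next
    case False then show ?thesis using key[of x y] assms by (simp add: abs_if)
  qed
qed

lemma ratio_bounds:
  assumes a1: "\<And>i. i \<in> {1..Suc n} \<Longrightarrow> 1 \<le> a i" and aM: "\<And>i. i \<in> {1..Suc n} \<Longrightarrow> a i \<le> M"
    and k: "1 \<le> k" "k \<le> n" and k': "k' = k \<or> k' = Suc k"
  shows "esym a n k / real (n choose k) / (real n + 1) \<le> esym a (Suc n) k' / real (Suc n choose k')"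
    and "esym a (Suc n) k' / real (Suc n choose k') \<le> (real n + 1) * (M + 1) * (esym a n k / real (n choose k))"
proof -
  have a1n: "\<And>i. i \<in> {1..n} \<Longrightarrow> 1 \<le> a i" using a1 by auto
  have aMn: "\<And>i. i \<in> {1..n} \<Longrightarrow> a i \<le> M" using aM by auto
  have an: "1 \<le> a (Suc n)" "a (Suc n) \<le> M" using a1 aM by auto
  have M1: "1 \<le> M" using an by simp
  define e where "e = esym a n k"
  define C where "C = real (n choose k)"
  have Cpos: "1 \<le> C" unfolding C_def using k by (simp add: Suc_leI)
  have eC: "C \<le> e" unfolding e_def C_def by (rule esym_ge_binom[OF a1n])
  have epos: "0 < e" using Cpos eC by simp
  define S where "S = e / C"
  have Spos: "0 < S" unfolding S_def using epos Cpos by simp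
  obtain j where j: "k = Suc j" using k by (cases k) auto
  have "(real n + 1) * M \<ge> 0" using M1 by simp
  have lowup: "S / (real n + 1) \<le> esym a (Suc n) k' / real (Suc n choose k') \<and>
        esym a (Suc n) k' / real (Suc n choose k') \<le> (real n + 1) * (M + 1) * S"
  proof (cases "k' = k")
    case True
    define C' where "C' = real (Suc n choose k)"
    have absorb: "(real (Suc n) - real k) * C' = real (Suc n) * C"
    proof -
      have "(Suc n - k) * (Suc n choose k) = Suc n * (n choose k)"
        using binomial_absorb_comp[of "Suc n" k] by simp
      then have "real ((Suc n - k) * (Suc n choose k)) = real (Suc n * (n choose k))" by simp
      then show ?thesis unfolding C'_def C_def using k by (simp add: of_nat_diff distrib_right)
    qed
    have CC': "C \<le> C'" unfolding C_def C'_def by (simp add: binomial_right_mono)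
    have C'up: "C' \<le> (real n + 1) * C"
    proof -
      have "1 \<le> real (Suc n) - real k" using k by simp
      then have "C' \<le> (real (Suc n) - real k) * C'" using CC' Cpos by (simp add: mult_le_cancel_right1)
      then show ?thesis using absorb by (simp add: add.commute)
    qed
    have e'eq: "esym a (Suc n) k = e + a (Suc n) * esym a n j" unfolding e_def j by (rule esym_Suc)
    have ej_nn: "0 \<le> esym a n j" by (rule esym_nonneg'[OF a1n])
    have I1: "(real n - real j) * esym a n j \<le> (real j + 1) * e" unfolding e_def j by (rule esym_I1[OF a1n])
    have ej: "esym a n j \<le> real n * e"
    proof -
      have "1 \<le> real n - real j" using k j by simp
      then have "esym a n j \<le> (real n - real j) * esym a n j" using ej_nn by (simp add: mult_le_cancel_right1)
      also have "\<dots> \<le> (real j + 1) * e" by (rule I1)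
      also have "\<dots> \<le> real n * e" using k j epos by (intro mult_right_mono) auto
      finally show ?thesis .
    qed
    have e'lo: "e \<le> esym a (Suc n) k" using e'eq an ej_nn by simp
    have e'up: "esym a (Suc n) k \<le> (1 + M * real n) * e"
    proof -
      have "a (Suc n) * esym a n j \<le> M * (real n * e)" using an ej ej_nn by (intro mult_mono) auto
      then show ?thesis using e'eq by (simp add: algebra_simps)
    qed
    have C'pos: "0 < C'" using CC' Cpos by simp
    have lo: "S / (real n + 1) \<le> esym a (Suc n) k / C'"
    proof -
      have "S / (real n + 1) = e / ((real n + 1) * C)" unfolding S_def by simp
      also have "\<dots> \<le> e / C'" using C'up C'pos epos by (intro divide_left_mono) auto
      also have "\<dots> \<le> esym a (Suc n) k / C'" using e'lo C'pos by (intro divide_right_mono) auto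
      finally show ?thesis .
    qed
    have up: "esym a (Suc n) k / C' \<le> (real n + 1) * (M + 1) * S"
    proof -
      have "esym a (Suc n) k / C' \<le> (1 + M * real n) * e / C'" using e'up C'pos by (intro divide_right_mono) auto
      also have "\<dots> \<le> (1 + M * real n) * e / C" using CC' Cpos epos M1
        by (intro divide_left_mono) auto
      also have "\<dots> = (1 + M * real n) * S" unfolding S_def by simp
      also have "\<dots> \<le> (real n + 1) * (M + 1) * S" using Spos M1
        by (intro mult_right_mono) (auto simp: algebra_simps)
      finally show ?thesis .
    qed
    show ?thesis using lo up True C'_def by simp
  next
    case False
    then have kk: "k' = Suc k" using k' by simp
    define C' where "C' = real (Suc n choose Suc k)"
    have absorb: "(real k + 1) * C' = (real n + 1) * C"
    proof -
      have "Suc k * (Suc n choose Suc k) = Suc n * (n choose k)" by (rule Suc_times_binomial)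
      then have "real (Suc k) * real (Suc n choose Suc k) = real (Suc n) * real (n choose k)"
        by (metis of_nat_mult)
      then show ?thesis unfolding C'_def C_def by (simp only: of_nat_Suc add.commute)
    qed
    have C'pos: "0 < C'" unfolding C'_def using k by (simp del: binomial_Suc_Suc)
    have C'up: "C' \<le> (real n + 1) * C"
    proof -
      have "C' \<le> (real k + 1) * C'" using C'pos by simp
      then show ?thesis using absorb by simp
    qed
    have CC': "C \<le> C'"
    proof -
      have "(real k + 1) * C \<le> (real n + 1) * C" using k Cpos by (intro mult_right_mono) auto
      then have "(real k + 1) * C \<le> (real k + 1) * C'" using absorb by simp
      then show ?thesis by (simp add: mult_le_cancel_left_pos)
    qed
    have e'eq: "esym a (Suc n) (Suc k) = esym a n (Suc k) + a (Suc n) * e" unfolding e_def by (rule esym_Suc)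
    have ek_nn: "0 \<le> esym a n (Suc k)" by (rule esym_nonneg'[OF a1n])
    have I2: "(real k + 1) * esym a n (Suc k) \<le> M * (real n - real k) * e" unfolding e_def by (rule esym_I2[OF a1n aMn])
    have ek: "esym a n (Suc k) \<le> M * real n * e"
    proof -
      have "esym a n (Suc k) \<le> (real k + 1) * esym a n (Suc k)"
        using mult_right_mono[of 1 "real k + 1" "esym a n (Suc k)"] ek_nn by simp
      also have "\<dots> \<le> M * (real n - real k) * e" by (rule I2)
      also have "\<dots> \<le> M * real n * e" using M1 epos by (intro mult_right_mono mult_left_mono) auto
      finally show ?thesis .
    qed
    have e'lo: "e \<le> esym a (Suc n) (Suc k)"
    proof -
      have "1 * e \<le> a (Suc n) * e" using an epos by (intro mult_right_mono) auto
      then show ?thesis using e'eq ek_nn by simp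
    qed
    have e'up: "esym a (Suc n) (Suc k) \<le> (M * real n + M) * e"
    proof -
      have "a (Suc n) * e \<le> M * e" using an epos by (intro mult_right_mono) auto
      then show ?thesis using e'eq ek by (simp add: algebra_simps)
    qed
    have lo: "S / (real n + 1) \<le> esym a (Suc n) (Suc k) / C'"
    proof -
      have "S / (real n + 1) = e / ((real n + 1) * C)" unfolding S_def by simp
      also have "\<dots> \<le> e / C'" using C'up C'pos epos by (intro divide_left_mono) auto
      also have "\<dots> \<le> esym a (Suc n) (Suc k) / C'" using e'lo C'pos by (intro divide_right_mono) auto
      finally show ?thesis .
    qed
    have up: "esym a (Suc n) (Suc k) / C' \<le> (real n + 1) * (M + 1) * S"
    proof -
      have "esym a (Suc n) (Suc k) / C' \<le> (M * real n + M) * e / C'" using e'up C'pos by (intro divide_right_mono) auto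
      also have "\<dots> \<le> (M * real n + M) * e / C" using CC' Cpos epos M1
        by (intro divide_left_mono) auto
      also have "\<dots> = (M * real n + M) * S" unfolding S_def by simp
      also have "\<dots> \<le> (real n + 1) * (M + 1) * S" using Spos M1
        by (intro mult_right_mono) (auto simp: algebra_simps)
      finally show ?thesis .
    qed
    show ?thesis using lo up kk C'_def by simp
  qed
  then show "esym a n k / real (n choose k) / (real n + 1) \<le> esym a (Suc n) k' / real (Suc n choose k')"
    and "esym a (Suc n) k' / real (Suc n choose k') \<le> (real n + 1) * (M + 1) * (esym a n k / real (n choose k))"
    unfolding S_def e_def C_def by auto
qed


lemma ln_over_n_tendsto: "(\<lambda>n::nat. ln (real n) / real n) \<longlonglongrightarrow> 0" by (rule lim_ln_over_n)

lemma det_main: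
  fixes c B :: real and a :: "nat \<Rightarrow> real" and N1 N2 :: nat
  assumes c: "0 < c" "c \<le> 1"
    and a1: "\<And>i. 1 \<le> i \<Longrightarrow> 1 \<le> a i"
    and asq: "\<And>i. N1 \<le> i \<Longrightarrow> a i \<le> real i ^ 2"
    and P: "\<And>n. N2 \<le> n \<Longrightarrow> (\<Prod>i\<in>{1..n}. a i) \<le> B ^ n"
    and B: "1 \<le> B"
  defines "T \<equiv> \<lambda>n::nat. root (nat \<lceil>c * real n\<rceil>) (esym a n (nat \<lceil>c * real n\<rceil>) / real (n choose nat \<lceil>c * real n\<rceil>))"
  shows "((\<lambda>n. \<bar>T n - T (Suc n)\<bar>) \<longlonglongrightarrow> 0) \<and> (\<lambda>n. \<bar>T n - T (Suc n)\<bar>) \<in> O(\<lambda>n. ln (real n) / real n)"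
proof -
  have a0: "\<And>i. 1 \<le> i \<Longrightarrow> 0 \<le> a i" using a1 by (meson order.trans zero_le_one)
  define k where "k = (\<lambda>n::nat. nat \<lceil>c * real n\<rceil>)"
  have kprops: "1 \<le> k n \<and> k n \<le> n \<and> c * real n \<le> real (k n)" if "1 \<le> n" for n
  proof -
    have pos: "0 < c * real n" using c that by simp
    have le: "c * real n \<le> real n" using c that by simp
    define z where "z = \<lceil>c * real n\<rceil>"
    have z1: "1 \<le> z" unfolding z_def using pos by (simp add: zero_less_ceiling)
    have z2: "z \<le> int n" unfolding z_def using le by (simp add: ceiling_le_iff)
    have z3: "c * real n \<le> real_of_int z" unfolding z_def by (rule le_of_int_ceiling)
    have kz: "int (k n) = z" unfolding k_def z_def[symmetric] using z1 by simp
    have "real (k n) = real_of_int z" using kz by (metis of_int_of_nat_eq)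
    then show ?thesis using z1 z2 z3 kz by linarith
  qed
  have kSuc: "k (Suc n) = k n \<or> k (Suc n) = Suc (k n)" for n
  proof -
    have "\<lceil>c * real n\<rceil> \<le> \<lceil>c * real (Suc n)\<rceil>" using c by (intro ceiling_mono) auto
    moreover have "\<lceil>c * real (Suc n)\<rceil> \<le> \<lceil>c * real n + 1\<rceil>" using c by (intro ceiling_mono) (auto simp: algebra_simps)
    moreover have "0 \<le> \<lceil>c * real n\<rceil>"
    proof -
      have "0 \<le> c * real n" using c by simp
      then show ?thesis by (simp add: zero_le_ceiling)
    qed
    ultimately show ?thesis unfolding k_def ceiling_add_one by linarith
  qed
  define S where "S = (\<lambda>n. esym a n (k n) / real (n choose k n))"
  have a1n: "\<And>i. i \<in> {1..n} \<Longrightarrow> 1 \<le> a i" for n using a1 by auto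
  have S1: "1 \<le> S n" if "1 \<le> n" for n
  proof -
    have e: "real (n choose k n) \<le> esym a n (k n)" by (rule esym_ge_binom[OF a1n])
    have "1 \<le> real (n choose k n)" using kprops[OF that] by (simp add: Suc_leI)
    then have Cp: "0 < real (n choose k n)" by linarith
    show ?thesis unfolding S_def by (subst le_divide_eq_1_pos[OF Cp]) (rule e)
  qed
  define L where "L = (\<lambda>n. ln (S n) / real (k n))"
  have TL: "T n = exp (L n)" if "1 \<le> n" for n
  proof -
    have Tn: "T n = root (k n) (S n)" unfolding T_def k_def S_def by simp
    have kp: "0 < k n" using kprops[OF that] by simp
    have Sp: "0 < S n" using S1[OF that] by simp
    have "ln (T n) = L n" unfolding Tn L_def by (rule ln_root[OF kp])
    moreover have "0 < T n" unfolding Tn using kp Sp by simp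
    ultimately show ?thesis by (metis exp_ln)
  qed
  have L0: "0 \<le> L n" if "1 \<le> n" for n
    unfolding L_def using S1[OF that] by simp
  define \<Lambda> where "\<Lambda> = ln (2 * B) / c"
  have \<Lambda>0: "0 \<le> \<Lambda>" unfolding \<Lambda>_def using B c by simp
  have Lup: "L n \<le> \<Lambda>" if "1 \<le> n" "N2 \<le> n" for n
  proof -
    have "S n \<le> esym a n (k n)"
    proof -
      have "1 \<le> real (n choose k n)" using kprops[OF that(1)] by (simp add: Suc_leI)
      moreover have "0 \<le> esym a n (k n)" by (rule esym_nonneg'[OF a1n])
      ultimately have "esym a n (k n) / real (n choose k n) \<le> esym a n (k n) / 1"
        using kprops[OF that(1)] by (intro divide_left_mono) auto
      then show ?thesis unfolding S_def by simp
    qed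
    also have "\<dots> \<le> (\<Prod>i\<in>{1..n}. 1 + a i)"
    proof -
      have "esym a n (k n) = esym (\<lambda>i. if i \<in> {1..n} then a i else 1) n (k n)"
        unfolding esym_def by (intro sum.cong refl prod.cong) auto
      also have "\<dots> \<le> (\<Prod>i\<in>{1..n}. 1 + (if i \<in> {1..n} then a i else 1))"
        by (rule esym_le_prod) (use a1 a0 in fastforce)
      also have "\<dots> = (\<Prod>i\<in>{1..n}. 1 + a i)" by (intro prod.cong) auto
      finally show ?thesis .
    qed
    also have "\<dots> \<le> (\<Prod>i\<in>{1..n}. 2 * a i)"
      by (intro prod_mono) (use a1 a0 in fastforce)
    also have "\<dots> = 2 ^ n * (\<Prod>i\<in>{1..n}. a i)" by (simp add: prod.distrib)
    also have "\<dots> \<le> 2 ^ n * B ^ n" using P[OF that(2)] by simp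
    also have "\<dots> = (2 * B) ^ n" by (simp add: power_mult_distrib)
    finally have Sle: "S n \<le> (2 * B) ^ n" .
    have "ln (S n) \<le> ln ((2 * B) ^ n)" using Sle S1[OF that(1)] by simp
    also have "\<dots> = real n * ln (2 * B)" using B by (intro ln_realpow)
    finally have lnS: "ln (S n) \<le> real n * ln (2 * B)" .
    have kp: "c * real n \<le> real (k n)" "0 < real (k n)" using kprops[OF that(1)] by auto
    have "L n \<le> real n * ln (2 * B) / real (k n)" unfolding L_def using lnS kp by (simp add: divide_right_mono)
    also have "\<dots> \<le> real n * ln (2 * B) / (c * real n)"
      using kp c that B by (intro divide_left_mono) auto
    also have "\<dots> = \<Lambda>" unfolding \<Lambda>_def using that c by simp
    finally show ?thesis .
  qed
  define C0 where "C0 = (\<Sum>i\<in>{1..<N1}. a i)"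
  have C00: "0 \<le> C0" unfolding C0_def by (intro sum_nonneg) (use a1 a0 in fastforce)
  define M where "M = (\<lambda>n::nat. C0 + (real n + 1) ^ 2)"
  have aM: "a i \<le> M n" if "i \<in> {1..Suc n}" for i n
  proof (cases "i < N1")
    case True
    have "a i \<le> C0" unfolding C0_def using True that
      by (intro member_le_sum) (use a0 in auto)
    moreover have "0 \<le> (real n + 1)^2" by simp
    ultimately show ?thesis unfolding M_def by linarith
  next
    case False
    then have "a i \<le> real i ^ 2" using asq by simp
    also have "\<dots> \<le> (real n + 1) ^ 2" using that by (intro power_mono) auto
    finally show ?thesis unfolding M_def using C00 by simp
  qed
  define Q where "Q = (\<lambda>n. ln ((real n + 1) * (M n + 1)))"
  have Mpos: "0 \<le> M n" for n unfolding M_def using C00 by simp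
  have Dbound: "\<bar>ln (S (Suc n)) - ln (S n)\<bar> \<le> Q n" if "1 \<le> n" for n
  proof -
    have rb1: "S n / (real n + 1) \<le> S (Suc n)" and rb2: "S (Suc n) \<le> (real n + 1) * (M n + 1) * S n"
      unfolding S_def
      by (rule ratio_bounds[OF a1n aM]; use kprops[OF that] kSuc[of n] in auto)+
    have Sp: "0 < S n" "0 < S (Suc n)" using S1 that by (auto intro: order.strict_trans2[OF zero_less_one])
    have np: "0 < real n + 1" by simp
    have Mp: "1 \<le> M n + 1" using Mpos by simp
    have "ln (S (Suc n)) \<le> ln ((real n + 1) * (M n + 1) * S n)" using rb2 Sp by simp
    also have "\<dots> = Q n + ln (S n)" unfolding Q_def using Sp np Mp by (simp add: ln_mult)
    finally have u: "ln (S (Suc n)) - ln (S n) \<le> Q n" by simp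
    have "ln (S n / (real n + 1)) \<le> ln (S (Suc n))" using rb1 Sp np by simp
    then have "ln (S n) - ln (real n + 1) \<le> ln (S (Suc n))" using Sp np by (simp add: ln_div)
    moreover have "ln (real n + 1) \<le> Q n" unfolding Q_def using np Mp
    proof -
      have "real n + 1 \<le> (real n + 1) * (M n + 1)" using Mp np by (simp add: mult_le_cancel_left1)
      then show "ln (real n + 1) \<le> ln ((real n + 1) * (M n + 1))" using np by simp
    qed
    ultimately show ?thesis using u by linarith
  qed
  have Ldiff: "\<bar>L (Suc n) - L n\<bar> \<le> (Q n + \<Lambda>) / (c * real n)" if "1 \<le> n" "N2 \<le> n" for n
  proof -
    have kp: "c * real n \<le> real (k n)" "1 \<le> k n" using kprops[OF that(1)] by auto
    have kq: "real (k n) \<le> real (k (Suc n))" "real (k (Suc n)) - real (k n) \<le> 1" using kSuc[of n] by auto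
    define D where "D = ln (S (Suc n)) - ln (S n)"
    have lnSn: "ln (S n) = real (k n) * L n" unfolding L_def using kp by simp
    have k'p: "0 < real (k (Suc n))" using kp kq by simp
    have eq: "L (Suc n) - L n = (D - (real (k (Suc n)) - real (k n)) * L n) / real (k (Suc n))"
    proof -
      have knp: "0 < real (k n)" using kp by simp
      have "D - (real (k (Suc n)) - real (k n)) * L n = ln (S (Suc n)) - real (k (Suc n)) * L n"
        unfolding D_def lnSn by (simp add: algebra_simps)
      then have "(D - (real (k (Suc n)) - real (k n)) * L n) / real (k (Suc n)) = ln (S (Suc n)) / real (k (Suc n)) - L n"
        using k'p by (simp add: diff_divide_distrib)
      then show ?thesis unfolding L_def by simp
    qed
    have "\<bar>D - (real (k (Suc n)) - real (k n)) * L n\<bar> \<le> \<bar>D\<bar> + (real (k (Suc n)) - real (k n)) * L n"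
    proof -
      have "0 \<le> (real (k (Suc n)) - real (k n)) * L n" using kq L0[OF that(1)] by simp
      then show ?thesis using abs_triangle_ineq4[of D "(real (k (Suc n)) - real (k n)) * L n"] by simp
    qed
    also have "\<dots> \<le> Q n + 1 * \<Lambda>" unfolding D_def
      using Dbound[OF that(1)] kq L0[OF that(1)] Lup[OF that] \<Lambda>0 by (intro add_mono mult_mono) auto
    finally have num: "\<bar>D - (real (k (Suc n)) - real (k n)) * L n\<bar> \<le> Q n + \<Lambda>" by simp
    have "\<bar>L (Suc n) - L n\<bar> = \<bar>D - (real (k (Suc n)) - real (k n)) * L n\<bar> / real (k (Suc n))"
      unfolding eq using k'p by simp
    also have "\<dots> \<le> (Q n + \<Lambda>) / real (k (Suc n))" using num k'p by (intro divide_right_mono) auto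
    also have "\<dots> \<le> (Q n + \<Lambda>) / (c * real n)"
    proof (intro divide_left_mono)
      show "0 \<le> Q n + \<Lambda>" using Dbound[OF that(1)] \<Lambda>0 by linarith
      show "c * real n \<le> real (k (Suc n))" using kp kq by linarith
      show "0 < real (k (Suc n)) * (c * real n)" using k'p c that by simp
    qed
    finally show ?thesis .
  qed
  define K where "K = exp \<Lambda> * (6 + ln (C0 + 2) + \<Lambda>) / c"
  have main: "\<bar>T n - T (Suc n)\<bar> \<le> K * (ln (real n) / real n)" if "3 \<le> n" "N2 \<le> n" for n
  proof -
    have n1: "1 \<le> n" using that by simp
    have "\<bar>T n - T (Suc n)\<bar> = \<bar>exp (L (Suc n)) - exp (L n)\<bar>" using TL[OF n1] TL[of "Suc n"] by simp
    also have "\<dots> \<le> exp \<Lambda> * \<bar>L (Suc n) - L n\<bar>" using Lup[OF n1 that(2)] Lup[of "Suc n"] that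
      by (intro exp_diff_le) auto
    also have "\<dots> \<le> exp \<Lambda> * ((Q n + \<Lambda>) / (c * real n))" using Ldiff[OF n1 that(2)] by (intro mult_left_mono) auto
    also have "\<dots> \<le> exp \<Lambda> * ((6 + ln (C0 + 2) + \<Lambda>) * ln (real n) / (c * real n))"
    proof -
      have lnn: "1 \<le> ln (real n)"
      proof -
        have "exp 1 \<le> (3::real)" using exp_le by simp
        also have "\<dots> \<le> real n" using that by simp
        finally have "ln (exp 1) \<le> ln (real n)" using that by (subst ln_le_cancel_iff) auto
        then show ?thesis by simp
      qed
      have "(real n + 1) * (M n + 1) \<le> (C0 + 2) * (real n ^ 2) ^ 3"
      proof -
        have n2: "real n + 1 \<le> real n ^ 2"
        proof -
          have "3 \<le> real n" using that by simp
          then have "3 * real n \<le> real n * real n" by (intro mult_right_mono) auto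
          then show ?thesis unfolding power2_eq_square using \<open>3 \<le> real n\<close> by linarith
        qed
        have "M n + 1 \<le> (C0 + 2) * (real n + 1) ^ 2"
        proof -
          have q1: "1 \<le> (real n + 1) ^ 2" by simp
          have "(C0 + 2) * (real n + 1) ^ 2 = (C0 + 1) * (real n + 1) ^ 2 + (real n + 1) ^ 2" by algebra
          moreover have "C0 + 1 \<le> (C0 + 1) * (real n + 1) ^ 2" using q1 C00 by (simp add: mult_le_cancel_left1)
          ultimately show ?thesis unfolding M_def by linarith
        qed
        then have "(real n + 1) * (M n + 1) \<le> (real n + 1) * ((C0 + 2) * (real n + 1) ^ 2)"
          by (intro mult_left_mono) auto
        also have "\<dots> = (C0 + 2) * (real n + 1) ^ 3" by (simp add: power2_eq_square power3_eq_cube)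
        also have "\<dots> \<le> (C0 + 2) * (real n ^ 2) ^ 3" using C00 n2 by (intro mult_left_mono power_mono) auto
        finally show ?thesis .
      qed
      moreover have "0 < (real n + 1) * (M n + 1)" using Mpos[of n] by (intro mult_pos_pos) auto
      ultimately have "Q n \<le> ln ((C0 + 2) * (real n ^ 2) ^ 3)" unfolding Q_def
        by (intro ln_mono) auto
      also have "\<dots> = ln (C0 + 2) + 6 * ln (real n)" using C00 that
        by (simp add: ln_mult ln_realpow power_mult[symmetric])
      finally have "Q n + \<Lambda> \<le> 6 * ln (real n) + ln (C0 + 2) + \<Lambda>" by simp
      also have "\<dots> \<le> (6 + ln (C0 + 2) + \<Lambda>) * ln (real n)"
      proof -
        have "0 \<le> ln (C0 + 2) + \<Lambda>" using C00 \<Lambda>0 by simp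
        then have "ln (C0 + 2) + \<Lambda> \<le> (ln (C0 + 2) + \<Lambda>) * ln (real n)" using lnn
          by (simp add: mult_le_cancel_left1)
        then show ?thesis by (simp add: algebra_simps)
      qed
      finally have "Q n + \<Lambda> \<le> (6 + ln (C0 + 2) + \<Lambda>) * ln (real n)" .
      then show ?thesis using c that by (intro mult_left_mono divide_right_mono) auto
    qed
    also have "\<dots> = K * (ln (real n) / real n)" unfolding K_def by simp
    finally show ?thesis .
  qed
  have ev: "eventually (\<lambda>n. \<bar>T n - T (Suc n)\<bar> \<le> K * (ln (real n) / real n)) sequentially"
    using main by (intro eventually_sequentiallyI[of "max 3 N2"]) auto
  have bo: "(\<lambda>n. \<bar>T n - T (Suc n)\<bar>) \<in> O(\<lambda>n. ln (real n) / real n)"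
  proof (rule bigoI)
    show "\<forall>\<^sub>F x in sequentially. norm \<bar>T x - T (Suc x)\<bar> \<le> K * norm (ln (real x) / real x)"
      using ev eventually_ge_at_top[of "1::nat"] by eventually_elim simp
  qed
  have lim: "(\<lambda>n. \<bar>T n - T (Suc n)\<bar>) \<longlonglongrightarrow> 0"
  proof (rule tendsto_sandwich[of "\<lambda>_. 0" _ _ "\<lambda>n. K * (ln (real n) / real n)"])
    show "\<forall>\<^sub>F n in sequentially. 0 \<le> \<bar>T n - T (Suc n)\<bar>" by simp
    show "\<forall>\<^sub>F n in sequentially. \<bar>T n - T (Suc n)\<bar> \<le> K * (ln (real n) / real n)" by (rule ev)
    show "(\<lambda>n. K * (ln (real n) / real n)) \<longlonglongrightarrow> 0"
      using tendsto_mult_right_zero[OF ln_over_n_tendsto, of K] by simp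
  qed simp
  show ?thesis using lim bo by simp
qed


lemma subst_piece:
  fixes b :: real and H :: "real \<Rightarrow> ennreal"
  assumes b: "1 \<le> b" and H[measurable]: "H \<in> borel_measurable borel"
  shows "(\<integral>\<^sup>+x. H x * indicator {1/(b+1)..1/b} x \<partial>lborel) =
         (\<integral>\<^sup>+y. H (1/(b+y)) * ennreal (1/(b+y)^2) * indicator {0..1} y \<partial>lborel)"
proof -
  define g where "g = (\<lambda>t::real. 1 / (b + 1 - t))"
  define g' where "g' = (\<lambda>t::real. 1 / (b + 1 - t)^2)"
  have deriv: "(g has_real_derivative g' t) (at t)" if "t \<in> {0..1}" for t
  proof -
    have nz: "b + 1 - t \<noteq> 0" using that b by auto
    show ?thesis unfolding g_def g'_def
      by (rule derivative_eq_intros refl | use nz in \<open>simp add: power2_eq_square\<close>)+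
  qed
  have cont: "continuous_on {0..1} g'" unfolding g'_def
    by (intro continuous_intros) (use b in auto)
  have nonneg: "\<And>t. t \<in> {0..1} \<Longrightarrow> g' t \<ge> 0" unfolding g'_def by simp
  have "(\<integral>\<^sup>+x. H x * indicator {g 0..g 1} x \<partial>lborel) = (\<integral>\<^sup>+x. H (g x) * g' x * indicator {0..1} x \<partial>lborel)"
    by (rule nn_integral_substitution_aux[OF H _ deriv cont nonneg]) auto
  also have "\<dots> = ennreal \<bar>-1\<bar> * (\<integral>\<^sup>+y. (\<lambda>x. H (g x) * g' x * indicator {0..1} x) (1 + (-1) * y) \<partial>lborel)"
    unfolding g_def g'_def by (rule nn_integral_real_affine) auto
  also have "\<dots> = (\<integral>\<^sup>+y. H (1/(b+y)) * ennreal (1/(b+y)^2) * indicator {0..1} y \<partial>lborel)"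
    unfolding g_def g'_def
    apply (simp only: abs_minus_cancel abs_one ennreal_1 mult_1)
    apply (intro nn_integral_cong)
    apply (auto simp: indicator_def)
    done
  finally show ?thesis unfolding g_def by simp
qed


definition Wk :: "nat \<Rightarrow> real \<Rightarrow> real" where
  "Wk m y = 1 / ((real m + 1 + y) * (real m + 2 + y))"

definition Fk :: "(nat \<Rightarrow> ennreal) \<Rightarrow> (real \<Rightarrow> ennreal) \<Rightarrow> real \<Rightarrow> ennreal" where
  "Fk g h x = g (nat \<lfloor>1/x\<rfloor>) * h (gauss_map x) * ennreal (1 / (1 + x))"

lemma gauss_map_meas[measurable]: "gauss_map \<in> borel_measurable borel"
  unfolding gauss_map_def frac_def by measurable

lemma Fk_meas[measurable]:
  assumes [measurable]: "h \<in> borel_measurable borel"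
  shows "Fk g h \<in> borel_measurable borel"
  unfolding Fk_def by measurable

lemma rho_aux:
  assumes B: "0 < (B::real)"
  shows "1/(1+1/B) * (1/B^2) = 1/(B*(B+1))"
proof -
  have e1: "1 + 1/B = (B+1)/B" using B by (simp add: field_simps)
  have "1/(1+1/B) * (1/B^2) = (B/(B+1)) * (1/(B*B))" by (simp add: e1 power2_eq_square)
  also have "\<dots> = 1/(B*(B+1))"
  proof -
    have B1: "B + 1 \<noteq> 0" "B \<noteq> 0" using B by auto
    show ?thesis using B1 by (simp add: divide_simps)
  qed
  finally show ?thesis .
qed

lemma piece_eq:
  assumes h[measurable]: "h \<in> borel_measurable borel"
  shows "(\<integral>\<^sup>+x. Fk g h x * indicator {1/(real m + 2)<..1/(real m + 1)} x \<partial>lborel) =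
         (\<integral>\<^sup>+y. g (Suc m) * h y * ennreal (Wk m y) * indicator {0..1} y \<partial>lborel)"
proof -
  define b where "b = real m + 1"
  have b1: "1 \<le> b" unfolding b_def by simp
  have "(\<integral>\<^sup>+x. Fk g h x * indicator {1/(real m + 2)<..1/(real m + 1)} x \<partial>lborel) =
        (\<integral>\<^sup>+x. Fk g h x * indicator {1/(b+1)..1/b} x \<partial>lborel)"
  proof (rule nn_integral_cong_AE)
    show "AE x in lborel. Fk g h x * indicator {1/(real m + 2)<..1/(real m + 1)} x = Fk g h x * indicator {1/(b+1)..1/b} x"
      using AE_lborel_singleton[of "1/(b+1)"]
      by eventually_elim (auto simp: indicator_def b_def add.assoc)
  qed
  also have "\<dots> = (\<integral>\<^sup>+y. Fk g h (1/(b+y)) * ennreal (1/(b+y)^2) * indicator {0..1} y \<partial>lborel)"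
    by (rule subst_piece[OF b1]) measurable
  also have "\<dots> = (\<integral>\<^sup>+y. g (Suc m) * h y * ennreal (Wk m y) * indicator {0..1} y \<partial>lborel)"
  proof (rule nn_integral_cong_AE)
    have "AE y in lborel. y \<noteq> 0 \<and> y \<noteq> 1" using AE_lborel_singleton[of 0] AE_lborel_singleton[of 1] by eventually_elim auto
    then show "AE y in lborel. Fk g h (1/(b+y)) * ennreal (1/(b+y)^2) * indicator {0..1} y = g (Suc m) * h y * ennreal (Wk m y) * indicator {0..1} y"
    proof eventually_elim
      case (elim y)
      show ?case
      proof (cases "y \<in> {0..1}")
        case False then show ?thesis by simp
      next
        case True
        then have y: "0 < y" "y < 1" using elim by auto
        have bpos: "0 < b + y" using b1 y by simp
        have fl: "\<lfloor>b + y\<rfloor> = int (Suc m)" unfolding b_def using y by (intro floor_unique) auto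
        have gm: "gauss_map (1/(b+y)) = y" unfolding gauss_map_def frac_def using fl bpos
          by (simp add: b_def)
        have nf: "nat \<lfloor>1 / (1/(b+y))\<rfloor> = Suc m" using fl bpos by simp
        have r: "1 / (1 + 1/(b+y)) * (1/(b+y)^2) = Wk m y"
          using rho_aux[OF bpos] unfolding Wk_def b_def by (simp add: add_ac)
        have "Fk g h (1/(b+y)) * ennreal (1/(b+y)^2) = g (Suc m) * h y * (ennreal (1 / (1 + 1/(b+y))) * ennreal (1/(b+y)^2))"
          unfolding Fk_def gm nf by (simp add: mult.assoc)
        also have "ennreal (1 / (1 + 1/(b+y))) * ennreal (1/(b+y)^2) = ennreal (1 / (1 + 1/(b+y)) * (1/(b+y)^2))"
          using bpos by (intro ennreal_mult[symmetric]) auto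
        also have "\<dots> = ennreal (Wk m y)" by (simp only: r)
        finally show ?thesis using True by simp
      qed
    qed
  qed
  finally show ?thesis .
qed

lemma A_disj: "disjoint_family (\<lambda>m::nat. {1/(real m + 2)<..1/(real m + 1)})"
proof -
  have key: "False" if "m < n" "x \<in> {1/(real m + 2)<..1/(real m + 1)}" "x \<in> {1/(real n + 2)<..1/(real n + 1)}" for m n :: nat and x :: real
  proof -
    have "1/(real n + 1) \<le> 1/(real m + 2)" using that(1) by (intro divide_left_mono) auto
    then show False using that by auto
  qed
  show ?thesis unfolding disjoint_family_on_def
  proof (intro ballI impI equalityI subsetI)
    fix m n :: nat and x assume "m \<noteq> n" "x \<in> {1/(real m + 2)<..1/(real m + 1)} \<inter> {1/(real n + 2)<..1/(real n + 1)}"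
    then have xm: "x \<in> {1/(real m + 2)<..1/(real m + 1)}" and xn: "x \<in> {1/(real n + 2)<..1/(real n + 1)}" by blast+
    show "x \<in> {}"
    proof (cases "m < n")
      case True then show ?thesis using key[OF True xm xn] by blast
    next
      case False then have "n < m" using \<open>m \<noteq> n\<close> by simp
      then show ?thesis using key[OF _ xn xm] by blast
    qed
  qed simp
qed

lemma A_cover:
  fixes x :: real assumes "x \<in> {0<..<1}"
  shows "x \<in> {1/(real (nat \<lfloor>1/x\<rfloor> - 1) + 2)<..1/(real (nat \<lfloor>1/x\<rfloor> - 1) + 1)}"
proof -
  have x: "0 < x" "x < 1" using assms by auto
  define j where "j = \<lfloor>1/x\<rfloor>"
  have "1 < 1/x" using x by (simp add: less_divide_eq)
  then have j1: "1 \<le> j" unfolding j_def by (simp add: le_floor_iff)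
  have jl: "real_of_int j \<le> 1/x" "1/x < real_of_int j + 1" unfolding j_def by linarith+
  have rj: "real (nat j - 1) + 1 = real_of_int j" using j1 by (simp add: of_nat_diff)
  have jpos: "0 < real_of_int j" using j1 by simp
  have u: "x \<le> 1 / real_of_int j" using jl(1) x jpos by (simp add: le_divide_eq mult.commute)
  have l: "1 / (real_of_int j + 1) < x" using jl(2) x jpos by (simp add: divide_less_eq mult.commute)
  have r2: "real (nat j - 1) + 2 = real_of_int j + 1" using rj by linarith
  show ?thesis unfolding j_def[symmetric] r2 rj using u l by simp
qed


lemma transfer:
  assumes h[measurable]: "h \<in> borel_measurable borel"
  shows "(\<integral>\<^sup>+x. Fk g h x * indicator {0<..<1} x \<partial>lborel) \<le>
         (\<integral>\<^sup>+y. h y * (\<Sum>m. g (Suc m) * ennreal (Wk m y)) * indicator {0..1} y \<partial>lborel)"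
proof -
  define A where "A = (\<lambda>m::nat. {1/(real m + 2)<..1/(real m + 1)})"
  have disj: "disjoint_family A" unfolding A_def by (rule A_disj)
  have pw: "Fk g h x * indicator {0<..<1} x \<le> (\<Sum>m. Fk g h x * indicator (A m) x)" for x
  proof (cases "x \<in> {0<..<1}")
    case True
    then have "x \<in> A (nat \<lfloor>1/x\<rfloor> - 1)" unfolding A_def by (rule A_cover)
    then have "(\<Sum>m. Fk g h x * indicator (A m) x) = Fk g h x"
      by (rule suminf_cmult_indicator[OF disj])
    then show ?thesis using True by simp
  qed simp
  have "(\<integral>\<^sup>+x. Fk g h x * indicator {0<..<1} x \<partial>lborel) \<le> (\<integral>\<^sup>+x. (\<Sum>m. Fk g h x * indicator (A m) x) \<partial>lborel)"
    by (intro nn_integral_mono pw)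
  also have "\<dots> = (\<Sum>m. \<integral>\<^sup>+x. Fk g h x * indicator (A m) x \<partial>lborel)"
    by (rule nn_integral_suminf) (simp add: A_def)
  also have "\<dots> = (\<Sum>m. \<integral>\<^sup>+y. g (Suc m) * h y * ennreal (Wk m y) * indicator {0..1} y \<partial>lborel)"
    unfolding A_def by (intro suminf_cong piece_eq h)
  also have "\<dots> = (\<integral>\<^sup>+y. (\<Sum>m. g (Suc m) * h y * ennreal (Wk m y) * indicator {0..1} y) \<partial>lborel)"
    by (rule nn_integral_suminf[symmetric]) (simp add: Wk_def)
  also have "\<dots> = (\<integral>\<^sup>+y. h y * (\<Sum>m. g (Suc m) * ennreal (Wk m y)) * indicator {0..1} y \<partial>lborel)"
  proof (intro nn_integral_cong)
    fix y
    have "(\<Sum>m. g (Suc m) * h y * ennreal (Wk m y) * indicator {0..1} y) = (\<Sum>m. (h y * indicator {0..1} y) * (g (Suc m) * ennreal (Wk m y)))"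
      by (simp add: mult_ac)
    also have "\<dots> = (h y * indicator {0..1} y) * (\<Sum>m. g (Suc m) * ennreal (Wk m y))"
      by (rule ennreal_suminf_cmult)
    finally show "(\<Sum>m. g (Suc m) * h y * ennreal (Wk m y) * indicator {0..1} y) = h y * (\<Sum>m. g (Suc m) * ennreal (Wk m y)) * indicator {0..1} y"
      by (simp add: mult_ac)
  qed
  finally show ?thesis .
qed


definition Iw :: "(real \<Rightarrow> ennreal) \<Rightarrow> ennreal" where
  "Iw h = (\<integral>\<^sup>+x. h x * ennreal (1/(1+x)) * indicator {0<..<1} x \<partial>lborel)"

lemma Wk_tele: "0 \<le> y \<Longrightarrow> Wk m y = 1/(real m + 1 + y) - 1/(real (Suc m) + 1 + y)"
proof -
  assume y: "0 \<le> y"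
  define u where "u = real m + 1 + y"
  have u: "0 < u" unfolding u_def using y by simp
  have "1/u - 1/(u+1) = 1/(u*(u+1))" using u by (simp add: divide_simps)
  then show ?thesis unfolding Wk_def u_def by (simp add: add_ac)
qed

lemma Wsum: "0 \<le> y \<Longrightarrow> (\<Sum>m. ennreal (Wk m y)) = ennreal (1/(1+y))"
proof -
  assume y: "0 \<le> y"
  have lim: "(\<lambda>n. 1 / (real n + 1 + y)) \<longlonglongrightarrow> 0"
  proof -
    have "filterlim (\<lambda>n. (1 + y) + real n) at_top sequentially"
      by (rule filterlim_tendsto_add_at_top[OF tendsto_const filterlim_real_sequentially])
    then have "filterlim (\<lambda>n. real n + 1 + y) at_top sequentially" by (simp add: add_ac)
    then show ?thesis by (intro tendsto_divide_0[OF tendsto_const] filterlim_at_top_imp_at_infinity)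
  qed
  have "(\<lambda>n. 1 / (real n + 1 + y) - 1 / (real (Suc n) + 1 + y)) sums (1 / (real 0 + 1 + y) - 0)"
    using telescope_sums'[OF lim] by simp
  then have "(\<lambda>m. Wk m y) sums (1/(1+y))" using Wk_tele[OF y] by (simp add: add_ac)
  moreover have "\<And>m. 0 \<le> Wk m y" unfolding Wk_def using y by simp
  ultimately show ?thesis by (intro suminf_ennreal_eq) auto
qed

lemma Iw_closed:
  "(\<integral>\<^sup>+y. h y * ennreal (1/(1+y)) * indicator {0..1} y \<partial>lborel) = Iw h"
  unfolding Iw_def
proof (rule nn_integral_cong_AE)
  show "AE y in lborel. h y * ennreal (1/(1+y)) * indicator {0..1} y = h y * ennreal (1/(1+y)) * indicator {0<..<1} y"
    using AE_lborel_singleton[of 0] AE_lborel_singleton[of 1] by eventually_elim (auto simp: indicator_def)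
qed

lemma Iw_inv:
  assumes h[measurable]: "h \<in> borel_measurable borel"
  shows "Iw (\<lambda>x. h (gauss_map x)) \<le> Iw h"
proof -
  have "Iw (\<lambda>x. h (gauss_map x)) = (\<integral>\<^sup>+x. Fk (\<lambda>_. 1) h x * indicator {0<..<1} x \<partial>lborel)"
    unfolding Iw_def Fk_def by simp
  also have "\<dots> \<le> (\<integral>\<^sup>+y. h y * (\<Sum>m. 1 * ennreal (Wk m y)) * indicator {0..1} y \<partial>lborel)"
    by (rule transfer[OF h])
  also have "\<dots> = (\<integral>\<^sup>+y. h y * ennreal (1/(1+y)) * indicator {0..1} y \<partial>lborel)"
    by (intro nn_integral_cong) (auto simp: indicator_def Wsum)
  also have "\<dots> = Iw h" by (rule Iw_closed)
  finally show ?thesis .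
qed

lemma Iw_iter:
  assumes h[measurable]: "h \<in> borel_measurable borel"
  shows "Iw (\<lambda>x. h ((gauss_map ^^ j) x)) \<le> Iw h"
  using h
proof (induction j arbitrary: h)
  case 0 then show ?case by simp
next
  case (Suc j)
  have m: "(gauss_map ^^ j) \<in> borel_measurable borel" for j
    by (induction j) (auto intro: measurable_compose[OF gauss_map_meas])
  have hm[measurable]: "h \<in> borel_measurable borel" by (rule Suc.prems)
  have hj: "(\<lambda>x. h ((gauss_map ^^ j) x)) \<in> borel_measurable borel"
    by (rule measurable_compose[OF m hm])
  have "Iw (\<lambda>x. h ((gauss_map ^^ Suc j) x)) = Iw (\<lambda>x. (\<lambda>y. h ((gauss_map ^^ j) y)) (gauss_map x))"
    by (simp add: funpow_Suc_right del: funpow.simps)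
  also have "\<dots> \<le> Iw (\<lambda>y. h ((gauss_map ^^ j) y))" by (rule Iw_inv[OF hj])
  also have "\<dots> \<le> Iw h" by (rule Suc.IH[OF hm])
  finally show ?case .
qed


definition Zc :: real where "Zc = (\<Sum>m. real (Suc m) powr (-3/2))"

lemma Zc_summable: "summable (\<lambda>m. real (Suc m) powr (-3/2))"
proof -
  have "summable (\<lambda>n. real n powr (-3/2))" by (subst summable_real_powr_iff) simp
  then show ?thesis by (subst summable_Suc_iff)
qed

lemma Zc_pos: "0 < Zc"
  unfolding Zc_def by (rule suminf_pos[OF Zc_summable]) simp

lemma powr_32: "0 < (s::real) \<Longrightarrow> s powr (-3/2) = sqrt s / s^2"
proof -
  assume s: "0 < s"
  have "s powr (-3/2) = s powr (1/2 - 2)" by simp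
  also have "\<dots> = s powr (1/2) / s powr 2" by (rule powr_diff)
  also have "\<dots> = sqrt s / s^2" using s by (simp add: powr_half_sqrt)
  finally show ?thesis .
qed

lemma term_bound:
  assumes y: "0 \<le> y" "y \<le> 1"
  shows "sqrt (real (Suc m)) * Wk m y \<le> 2/(1+y) * real (Suc m) powr (-3/2)"
proof -
  define s where "s = real (Suc m)"
  have s: "1 \<le> s" unfolding s_def by simp
  have W: "Wk m y \<le> 1 / s^2"
  proof -
    have "s * s \<le> (real m + 1 + y) * (real m + 2 + y)" unfolding s_def using y
      by (intro mult_mono) auto
    moreover have P: "0 < (real m + 1 + y) * (real m + 2 + y)" using y by (intro mult_pos_pos) auto
    moreover have ss: "0 < s * s" using s by simp
    ultimately show ?thesis unfolding Wk_def power2_eq_square by (intro divide_left_mono) (use P ss y s in auto)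
  qed
  have "sqrt s * Wk m y \<le> sqrt s * (1 / s^2)" using W s by (intro mult_left_mono) auto
  also have "\<dots> = s powr (-3/2)" using powr_32[of s] s by simp
  also have "\<dots> \<le> 2/(1+y) * s powr (-3/2)"
  proof -
    have "1 \<le> 2/(1+y)" using y by (simp add: le_divide_eq)
    then show ?thesis using mult_right_mono[of 1 "2/(1+y)" "s powr (-3/2)"] by simp
  qed
  finally show ?thesis unfolding s_def .
qed

lemma Iw_mom:
  assumes h[measurable]: "h \<in> borel_measurable borel"
  shows "Iw (\<lambda>x. ennreal (sqrt (real (nat \<lfloor>1/x\<rfloor>))) * h (gauss_map x)) \<le> ennreal (2 * Zc) * Iw h"
proof -
  define g where "g = (\<lambda>j::nat. ennreal (sqrt (real j)))"
  have pw: "(\<Sum>m. g (Suc m) * ennreal (Wk m y)) \<le> ennreal (2 * Zc * (1/(1+y)))" if y: "0 \<le> y" "y \<le> 1" for y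
  proof -
    have "(\<Sum>m. g (Suc m) * ennreal (Wk m y)) = (\<Sum>m. ennreal (sqrt (real (Suc m)) * Wk m y))"
      unfolding g_def using y by (intro suminf_cong) (subst ennreal_mult[symmetric], auto simp: Wk_def)
    also have "\<dots> \<le> (\<Sum>m. ennreal (2/(1+y) * real (Suc m) powr (-3/2)))"
      by (intro suminf_le summableI ennreal_leI term_bound y)
    also have "\<dots> = ennreal (\<Sum>m. 2/(1+y) * real (Suc m) powr (-3/2))"
      using y by (intro suminf_ennreal2 summable_mult Zc_summable) auto
    also have "(\<Sum>m. 2/(1+y) * real (Suc m) powr (-3/2)) = 2/(1+y) * Zc"
      unfolding Zc_def by (rule suminf_mult[OF Zc_summable])
    finally show ?thesis by (simp add: mult_ac)
  qed
  have "Iw (\<lambda>x. ennreal (sqrt (real (nat \<lfloor>1/x\<rfloor>))) * h (gauss_map x)) = (\<integral>\<^sup>+x. Fk g h x * indicator {0<..<1} x \<partial>lborel)"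
    unfolding Iw_def Fk_def g_def by simp
  also have "\<dots> \<le> (\<integral>\<^sup>+y. h y * (\<Sum>m. g (Suc m) * ennreal (Wk m y)) * indicator {0..1} y \<partial>lborel)"
    by (rule transfer[OF h])
  also have "\<dots> \<le> (\<integral>\<^sup>+y. h y * ennreal (2 * Zc * (1/(1+y))) * indicator {0..1} y \<partial>lborel)"
  proof (intro nn_integral_mono)
    fix y
    show "h y * (\<Sum>m. g (Suc m) * ennreal (Wk m y)) * indicator {0..1} y \<le> h y * ennreal (2 * Zc * (1/(1+y))) * indicator {0..1} y"
    proof (cases "y \<in> {0..1}")
      case True
      then have "(\<Sum>m. g (Suc m) * ennreal (Wk m y)) \<le> ennreal (2 * Zc * (1/(1+y)))" using pw by auto
      then show ?thesis by (intro mult_right_mono mult_left_mono) auto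
    qed simp
  qed
  also have "\<dots> = (\<integral>\<^sup>+y. ennreal (2 * Zc) * (h y * ennreal (1/(1+y)) * indicator {0..1} y) \<partial>lborel)"
  proof (intro nn_integral_cong)
    fix y
    show "h y * ennreal (2 * Zc * (1/(1+y))) * indicator {0..1} y = ennreal (2 * Zc) * (h y * ennreal (1/(1+y)) * indicator {0..1} y)"
    proof (cases "y \<in> {0..1}")
      case True
      then have "ennreal (2 * Zc * (1/(1+y))) = ennreal (2 * Zc) * ennreal (1/(1+y))"
        using Zc_pos by (intro ennreal_mult) auto
      then show ?thesis by (simp add: mult_ac)
    qed simp
  qed
  also have "\<dots> = ennreal (2 * Zc) * (\<integral>\<^sup>+y. h y * ennreal (1/(1+y)) * indicator {0..1} y \<partial>lborel)"
    by (rule nn_integral_cmult) measurable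
  also have "\<dots> = ennreal (2 * Zc) * Iw h" by (simp add: Iw_closed)
  finally show ?thesis .
qed


lemma funpow_meas[measurable]: "(gauss_map ^^ j) \<in> borel_measurable borel"
  by (induction j) (auto intro: measurable_compose[OF _ gauss_map_meas])

lemma cf_digit_meas[measurable]: "(\<lambda>x. real (cf_digit x i)) \<in> borel_measurable borel"
  unfolding cf_digit_def by measurable

definition Pd :: "nat \<Rightarrow> real \<Rightarrow> real" where
  "Pd n x = (\<Prod>i\<in>{1..n}. real (cf_digit x i))"

lemma Pd_meas[measurable]: "Pd n \<in> borel_measurable borel"
  unfolding Pd_def by measurable

lemma Pd_nonneg: "0 \<le> Pd n x" unfolding Pd_def by (intro prod_nonneg) auto

lemma cf_digit_shift: "1 \<le> i \<Longrightarrow> cf_digit x (Suc i) = cf_digit (gauss_map x) i"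
proof -
  assume i: "1 \<le> i"
  then obtain j where j: "i = Suc j" by (cases i) auto
  show ?thesis unfolding cf_digit_def j by (simp add: funpow_Suc_right del: funpow.simps)
qed

lemma cf_digit_1: "cf_digit x 1 = nat \<lfloor>1/x\<rfloor>" unfolding cf_digit_def by simp

lemma cf_digit_Suc_pred: "cf_digit x n = cf_digit x (Suc (n - 1))"
  unfolding cf_digit_def by simp

lemma cf_digit_iter: "cf_digit x (Suc j) = nat \<lfloor>1 / (gauss_map ^^ j) x\<rfloor>"
  unfolding cf_digit_def by simp

lemma Pd_Suc: "Pd (Suc n) x = real (nat \<lfloor>1/x\<rfloor>) * Pd n (gauss_map x)"
proof -
  have "{1..Suc n} = insert 1 {Suc 1..Suc n}" by auto
  then have "Pd (Suc n) x = real (cf_digit x 1) * (\<Prod>i\<in>{Suc 1..Suc n}. real (cf_digit x i))"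
    unfolding Pd_def by simp
  also have "(\<Prod>i\<in>{Suc 1..Suc n}. real (cf_digit x i)) = (\<Prod>i\<in>{1..n}. real (cf_digit x (Suc i)))"
    by (rule prod.shift_bounds_cl_Suc_ivl)
  also have "\<dots> = Pd n (gauss_map x)" unfolding Pd_def
    by (intro prod.cong refl) (simp add: cf_digit_shift)
  finally show ?thesis by (simp only: cf_digit_1)
qed

lemma Iw_one: "Iw (\<lambda>_. 1) \<le> 1"
proof -
  have pw: "1 * ennreal (1/(1+x)) * indicator {0<..<1} x \<le> (indicator {0<..<1} x :: ennreal)" for x :: real
    by (cases "x \<in> {0<..<1}") (auto intro: ennreal_leI)
  have "Iw (\<lambda>_. 1) \<le> (\<integral>\<^sup>+x. indicator {0<..<1::real} x \<partial>lborel)"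
    unfolding Iw_def by (rule nn_integral_mono) (rule pw)
  also have "\<dots> = 1" by simp
  finally show ?thesis .
qed

lemma Iw_Pd: "Iw (\<lambda>x. ennreal (sqrt (Pd n x))) \<le> ennreal ((2 * Zc) ^ n)"
proof (induction n)
  case 0 then show ?case using Iw_one by (simp add: Pd_def)
next
  case (Suc n)
  have "Iw (\<lambda>x. ennreal (sqrt (Pd (Suc n) x))) = Iw (\<lambda>x. ennreal (sqrt (real (nat \<lfloor>1/x\<rfloor>))) * (\<lambda>y. ennreal (sqrt (Pd n y))) (gauss_map x))"
    unfolding Iw_def Pd_Suc real_sqrt_mult
    by (intro nn_integral_cong) (simp add: ennreal_mult Pd_nonneg)
  also have "\<dots> \<le> ennreal (2 * Zc) * Iw (\<lambda>y. ennreal (sqrt (Pd n y)))"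
    by (rule Iw_mom) measurable
  also have "\<dots> \<le> ennreal (2 * Zc) * ennreal ((2 * Zc) ^ n)" by (intro mult_left_mono Suc.IH) auto
  also have "\<dots> = ennreal ((2 * Zc) ^ Suc n)" using Zc_pos by (simp add: ennreal_mult[symmetric])
  finally show ?case .
qed


lemma leb_le_Iw:
  assumes E[measurable]: "E \<in> sets borel"
  shows "emeasure lborel (E \<inter> {0<..<1}) \<le> 2 * Iw (indicator E)"
proof -
  have "emeasure lborel (E \<inter> {0<..<1}) = (\<integral>\<^sup>+x. indicator (E \<inter> {0<..<1}) x \<partial>lborel)"
    by (rule nn_integral_indicator[symmetric]) simp
  also have "\<dots> \<le> (\<integral>\<^sup>+x. 2 * (indicator E x * ennreal (1/(1+x)) * indicator {0<..<1} x) \<partial>lborel)"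
  proof (rule nn_integral_mono)
    fix x :: real
    show "indicator (E \<inter> {0<..<1}) x \<le> 2 * (indicator E x * ennreal (1/(1+x)) * indicator {0<..<1} x)"
    proof (cases "x \<in> E \<inter> {0<..<1}")
      case True
      then have x: "0 < x" "x < 1" by auto
      have "ennreal 1 \<le> ennreal (2 * (1/(1+x)))" using x by (intro ennreal_leI) (simp add: le_divide_eq)
      also have "ennreal (2 * (1/(1+x))) = 2 * ennreal (1/(1+x))" using x by (subst ennreal_mult) auto
      finally show ?thesis using True by simp
    qed simp
  qed
  also have "\<dots> = 2 * Iw (indicator E)" unfolding Iw_def by (rule nn_integral_cmult) measurable
  finally show ?thesis .
qed

lemma tail_bound:
  assumes m: "1 \<le> m"
  shows "Iw (indicator {x. m \<le> cf_digit x (Suc j)}) \<le> ennreal (1 / real m)"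
proof -
  define h :: "real \<Rightarrow> ennreal" where "h = indicator {y. m \<le> nat \<lfloor>1/y\<rfloor>}"
  have hm[measurable]: "h \<in> borel_measurable borel" unfolding h_def by measurable
  have "Iw (indicator {x. m \<le> cf_digit x (Suc j)}) = Iw (\<lambda>x. h ((gauss_map ^^ j) x))"
    unfolding h_def cf_digit_iter by (intro arg_cong[where f=Iw] ext) (simp add: indicator_def)
  also have "\<dots> \<le> Iw h" by (rule Iw_iter[OF hm])
  also have "\<dots> \<le> (\<integral>\<^sup>+y. indicator {0..1/real m} y \<partial>lborel)"
    unfolding Iw_def
  proof (rule nn_integral_mono)
    fix y :: real
    show "h y * ennreal (1/(1+y)) * indicator {0<..<1} y \<le> indicator {0..1/real m} y"
    proof (cases "y \<in> {0<..<1} \<and> m \<le> nat \<lfloor>1/y\<rfloor>")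
      case True
      then have y: "0 < y" "y < 1" and mf: "m \<le> nat \<lfloor>1/y\<rfloor>" by auto
      have "real m \<le> of_int \<lfloor>1/y\<rfloor>" using mf m by linarith
      also have "\<dots> \<le> 1/y" by simp
      finally have "real m \<le> 1/y" .
      then have "y \<le> 1/real m" using y m by (simp add: le_divide_eq mult.commute)
      then have "y \<in> {0..1/real m}" using y by simp
      moreover have "ennreal (1/(1+y)) \<le> ennreal 1" using y by (intro ennreal_leI) simp
      ultimately show ?thesis using True unfolding h_def by simp
    next
      case False
      then show ?thesis unfolding h_def by (auto simp: indicator_def)
    qed
  qed
  also have "\<dots> = ennreal (1 / real m)" by simp
  finally show ?thesis .
qed


lemma BC_AE:
  fixes A :: "nat \<Rightarrow> real set"
  assumes A[measurable]: "\<And>n. A n \<in> sets borel"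
    and le: "\<And>n. emeasure lborel (A n) \<le> ennreal (b n)" and b0: "\<And>n. 0 \<le> b n" and sb: "summable b"
  shows "AE x in lborel. eventually (\<lambda>n. x \<notin> A n) sequentially"
proof -
  have fin: "emeasure lborel (A n) < \<infinity>" for n using le[of n] by (simp add: le_less_trans)
  have mb: "measure lborel (A n) \<le> b n" for n
  proof -
    have "enn2real (emeasure lborel (A n)) \<le> enn2real (ennreal (b n))" by (intro enn2real_mono le) simp
    then show ?thesis using b0[of n] by (simp add: measure_def)
  qed
  have "summable (\<lambda>n. measure lborel (A n))"
    by (rule summable_comparison_test'[OF sb]) (use mb in auto)
  then have "AE x in lborel. eventually (\<lambda>n. x \<in> space lborel - A n) sequentially"
    by (intro borel_cantelli_AE1) (use fin in auto)
  then show ?thesis by simp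
qed

lemma cf_digit_meas_nat[measurable]: "(\<lambda>x. cf_digit x i) \<in> borel \<rightarrow>\<^sub>M count_space UNIV"
  unfolding cf_digit_def by measurable

definition Bc :: real where "Bc = 4 * Zc"

lemma Zc_ge1: "1 \<le> Zc"
proof -
  have "sum (\<lambda>m. real (Suc m) powr (-3/2)) {0} \<le> Zc"
    unfolding Zc_def by (rule sum_le_suminf[OF Zc_summable]) auto
  then show ?thesis by simp
qed

lemma Bset_bound:
  "emeasure lborel ({x. Bc ^ n < sqrt (Pd n x)} \<inter> {0<..<1}) \<le> ennreal (2 * (1/2) ^ n)"
proof -
  have Bpos: "0 < Bc" unfolding Bc_def using Zc_pos by simp
  have "Iw (indicator {x. Bc ^ n < sqrt (Pd n x)}) \<le> Iw (\<lambda>x. ennreal (sqrt (Pd n x)) * ennreal (1 / Bc ^ n))"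
    unfolding Iw_def
  proof (rule nn_integral_mono)
    fix x :: real
    have "indicator {x. Bc ^ n < sqrt (Pd n x)} x \<le> ennreal (sqrt (Pd n x)) * ennreal (1 / Bc ^ n)"
    proof (cases "Bc ^ n < sqrt (Pd n x)")
      case True
      have "ennreal 1 \<le> ennreal (sqrt (Pd n x) * (1 / Bc ^ n))"
        using True Bpos by (intro ennreal_leI) (simp add: le_divide_eq)
      also have "\<dots> = ennreal (sqrt (Pd n x)) * ennreal (1 / Bc ^ n)" using Bpos by (subst ennreal_mult) (auto simp: Pd_nonneg)
      finally show ?thesis using True by simp
    qed simp
    then show "indicator {x. Bc ^ n < sqrt (Pd n x)} x * ennreal (1/(1+x)) * indicator {0<..<1} x \<le>
          ennreal (sqrt (Pd n x)) * ennreal (1 / Bc ^ n) * ennreal (1/(1+x)) * indicator {0<..<1} x"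
      by (intro mult_right_mono) auto
  qed
  also have "\<dots> = Iw (\<lambda>x. ennreal (sqrt (Pd n x))) * ennreal (1 / Bc ^ n)"
  proof -
    have "Iw (\<lambda>x. ennreal (sqrt (Pd n x)) * ennreal (1 / Bc ^ n)) =
      (\<integral>\<^sup>+x. (ennreal (sqrt (Pd n x)) * ennreal (1/(1+x)) * indicator {0<..<1} x) * ennreal (1 / Bc ^ n) \<partial>lborel)"
      unfolding Iw_def by (intro nn_integral_cong) (simp only: mult_ac)
    also have "\<dots> = Iw (\<lambda>x. ennreal (sqrt (Pd n x))) * ennreal (1 / Bc ^ n)"
      unfolding Iw_def by (rule nn_integral_multc) measurable
    finally show ?thesis .
  qed
  also have "\<dots> \<le> ennreal ((2 * Zc) ^ n) * ennreal (1 / Bc ^ n)" by (intro mult_right_mono Iw_Pd) auto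
  also have "\<dots> = ennreal ((1/2) ^ n)"
  proof -
    have q: "(2 * Zc) / Bc = 1/2" unfolding Bc_def using Zc_pos by simp
    have "(2 * Zc) ^ n * (1 / Bc ^ n) = ((2 * Zc) / Bc) ^ n" by (simp add: power_divide)
    then have "(2 * Zc) ^ n * (1 / Bc ^ n) = (1/2) ^ n" unfolding q .
    then show ?thesis using Zc_pos Bpos by (subst ennreal_mult[symmetric]) auto
  qed
  finally have I: "Iw (indicator {x. Bc ^ n < sqrt (Pd n x)}) \<le> ennreal ((1/2) ^ n)" .
  have "emeasure lborel ({x. Bc ^ n < sqrt (Pd n x)} \<inter> {0<..<1}) \<le> 2 * Iw (indicator {x. Bc ^ n < sqrt (Pd n x)})"
    by (rule leb_le_Iw) measurable
  also have "\<dots> \<le> 2 * ennreal ((1/2) ^ n)" using I by (intro mult_left_mono) auto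
  also have "\<dots> = ennreal (2 * (1/2) ^ n)" by (subst ennreal_mult) auto
  finally show ?thesis .
qed

lemma Aset_bound:
  "emeasure lborel ({x. n^2 + 1 \<le> cf_digit x (Suc (n - 1))} \<inter> {0<..<1}) \<le> ennreal (2 / (real n ^ 2 + 1))"
proof -
  have "emeasure lborel ({x. n^2 + 1 \<le> cf_digit x (Suc (n - 1))} \<inter> {0<..<1}) \<le> 2 * Iw (indicator {x. n^2 + 1 \<le> cf_digit x (Suc (n - 1))})"
    by (rule leb_le_Iw) measurable
  also have "\<dots> \<le> 2 * ennreal (1 / real (n^2 + 1))" by (intro mult_left_mono tail_bound) auto
  also have "\<dots> = ennreal (2 * (1 / real (n^2 + 1)))" by (subst ennreal_mult) auto
  also have "\<dots> = ennreal (2 / (real n ^ 2 + 1))" by simp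
  finally show ?thesis .
qed


lemma gauss_irr:
  assumes x: "x \<in> {0<..<1}" "x \<notin> \<rat>"
  shows "gauss_map x \<in> {0<..<1} \<and> gauss_map x \<notin> \<rat>"
proof -
  have ix: "1/x \<notin> \<rat>"
  proof
    assume "1/x \<in> \<rat>"
    then have "1/(1/x) \<in> \<rat>" by (rule Rats_divide[OF Rats_1])
    then show False using x by simp
  qed
  have fr: "frac (1/x) \<notin> \<rat>"
  proof
    assume "frac (1/x) \<in> \<rat>"
    then have "frac (1/x) + of_int \<lfloor>1/x\<rfloor> \<in> \<rat>" by (intro Rats_add) auto
    then show False using ix by (simp add: frac_def)
  qed
  have "frac (1/x) \<noteq> 0" using fr by (metis Rats_0)
  moreover have "0 \<le> frac (1/x)" "frac (1/x) < 1" by (rule frac_ge_0, rule frac_lt_1)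
  ultimately show ?thesis using fr unfolding gauss_map_def by auto
qed

lemma iter_irr:
  assumes x: "x \<in> {0<..<1}" "x \<notin> \<rat>"
  shows "(gauss_map ^^ j) x \<in> {0<..<1} \<and> (gauss_map ^^ j) x \<notin> \<rat>"
  by (induction j) (use x gauss_irr in auto)

lemma digit_ge1:
  assumes x: "x \<in> {0<..<1}" "x \<notin> \<rat>"
  shows "1 \<le> cf_digit x i"
proof -
  define y where "y = (gauss_map ^^ (i - 1)) x"
  have y: "0 < y" "y < 1" using iter_irr[OF x, of "i - 1"] unfolding y_def by auto
  have "1 < 1/y" using y by (simp add: less_divide_eq)
  then have z: "1 \<le> \<lfloor>1/y\<rfloor>" using y by (simp add: le_floor_iff)
  have "1 \<le> nat \<lfloor>1/y\<rfloor>" using z y by (subst le_nat_iff) auto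
  then show ?thesis unfolding cf_digit_def y_def[symmetric] .
qed

theorem lemma3p8:
  fixes c :: real
  assumes "0 < c" and "c \<le> 1"
  shows "AE \<alpha> in lborel. \<alpha> \<in> {0<..<1} \<and> \<alpha> \<notin> \<rat> \<longrightarrow>
     (let T = (\<lambda>n::nat. root (nat \<lceil>c * real n\<rceil>) (S_avg \<alpha> n (nat \<lceil>c * real n\<rceil>)))
      in ((\<lambda>n. \<bar>T n - T (Suc n)\<bar>) \<longlonglongrightarrow> 0) \<and>
         (\<lambda>n. \<bar>T n - T (Suc n)\<bar>) \<in> O(\<lambda>n. ln (real n) / real n))"
proof -
  define An where "An = (\<lambda>n::nat. {x. n^2 + 1 \<le> cf_digit x (Suc (n - 1))} \<inter> {0<..<1::real})"
  define Bn where "Bn = (\<lambda>n::nat. {x. Bc ^ n < sqrt (Pd n x)} \<inter> {0<..<1::real})"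
  have AE1: "AE x in lborel. eventually (\<lambda>n. x \<notin> An n) sequentially"
  proof (rule BC_AE[where b = "\<lambda>n. 2 / (real n ^ 2 + 1)"])
    show "An n \<in> sets borel" for n unfolding An_def by measurable
    show "emeasure lborel (An n) \<le> ennreal (2 / (real n ^ 2 + 1))" for n unfolding An_def by (rule Aset_bound)
    show "0 \<le> 2 / (real n ^ 2 + 1)" for n by simp
    have sg: "summable (\<lambda>n. 2 * inverse (real n ^ 2))"
      by (intro summable_mult inverse_power_summable) simp
    show "summable (\<lambda>n. 2 / (real n ^ 2 + 1))"
    proof (rule summable_comparison_test'[OF sg, of 1])
      fix n :: nat assume "1 \<le> n"
      then have p: "0 < real n ^ 2" by simp
      have p2: "0 < real n ^ 2 + 1" using p by linarith
      have "2 / (real n ^ 2 + 1) \<le> 2 / real n ^ 2" using p p2 by (intro divide_left_mono mult_pos_pos) auto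
      then show "norm (2 / (real n ^ 2 + 1)) \<le> 2 * inverse (real n ^ 2)"
        using p2 by (simp add: inverse_eq_divide)
    qed
  qed
  have AE2: "AE x in lborel. eventually (\<lambda>n. x \<notin> Bn n) sequentially"
  proof (rule BC_AE[where b = "\<lambda>n. 2 * (1/2) ^ n"])
    show "Bn n \<in> sets borel" for n unfolding Bn_def by measurable
    show "emeasure lborel (Bn n) \<le> ennreal (2 * (1/2) ^ n)" for n unfolding Bn_def by (rule Bset_bound)
    show "0 \<le> 2 * (1/2::real) ^ n" for n by simp
    show "summable (\<lambda>n. 2 * (1/2::real) ^ n)" by (intro summable_mult summable_geometric) simp
  qed
  show ?thesis
    using AE1 AE2
  proof eventually_elim
    case (elim x)
    show ?case
    proof (intro impI)
      assume x: "x \<in> {0<..<1} \<and> x \<notin> \<rat>"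
      then have x1: "x \<in> {0<..<1}" and x2: "x \<notin> \<rat>" by auto
      obtain N1 where N1: "\<And>n. N1 \<le> n \<Longrightarrow> x \<notin> An n" using elim(1) unfolding eventually_sequentially by blast
      obtain N2 where N2: "\<And>n. N2 \<le> n \<Longrightarrow> x \<notin> Bn n" using elim(2) unfolding eventually_sequentially by blast
      define a where "a = (\<lambda>i. real (cf_digit x i))"
      have a1: "\<And>i. 1 \<le> i \<Longrightarrow> 1 \<le> a i" unfolding a_def using digit_ge1[OF x1 x2] by simp
      have asq: "a i \<le> real i ^ 2" if "N1 \<le> i" for i
      proof -
        have "\<not> i^2 + 1 \<le> cf_digit x (Suc (i - 1))" using N1[OF that] x1 unfolding An_def by auto
        then have "cf_digit x i \<le> i^2" using cf_digit_Suc_pred[of x i] by simp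
        then show ?thesis unfolding a_def by (metis of_nat_le_iff of_nat_power)
      qed
      have Bc1: "1 \<le> Bc" unfolding Bc_def using Zc_ge1 by simp
      have P: "(\<Prod>i\<in>{1..n}. a i) \<le> (Bc ^ 2) ^ n" if "N2 \<le> n" for n
      proof -
        have "\<not> Bc ^ n < sqrt (Pd n x)" using N2[OF that] x1 unfolding Bn_def by auto
        then have s: "sqrt (Pd n x) \<le> Bc ^ n" by simp
        have "Pd n x = (sqrt (Pd n x)) ^ 2" using Pd_nonneg by simp
        also have "\<dots> \<le> (Bc ^ n) ^ 2" using s using Pd_nonneg[of n x] by (intro power_mono) auto
        also have "\<dots> = (Bc ^ 2) ^ n" by (simp add: power_mult[symmetric] mult.commute)
        finally show ?thesis unfolding Pd_def a_def .
      qed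
      have B1: "1 \<le> Bc ^ 2" using Bc1 by (simp add: one_le_power)
      have D: "((\<lambda>n. \<bar>(\<lambda>n::nat. root (nat \<lceil>c * real n\<rceil>) (esym a n (nat \<lceil>c * real n\<rceil>) / real (n choose nat \<lceil>c * real n\<rceil>))) n -
              (\<lambda>n::nat. root (nat \<lceil>c * real n\<rceil>) (esym a n (nat \<lceil>c * real n\<rceil>) / real (n choose nat \<lceil>c * real n\<rceil>))) (Suc n)\<bar>) \<longlonglongrightarrow> 0) \<and>
          (\<lambda>n. \<bar>(\<lambda>n::nat. root (nat \<lceil>c * real n\<rceil>) (esym a n (nat \<lceil>c * real n\<rceil>) / real (n choose nat \<lceil>c * real n\<rceil>))) n -
              (\<lambda>n::nat. root (nat \<lceil>c * real n\<rceil>) (esym a n (nat \<lceil>c * real n\<rceil>) / real (n choose nat \<lceil>c * real n\<rceil>))) (Suc n)\<bar>) \<in> O(\<lambda>n. ln (real n) / real n)"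
        by (rule det_main[OF assms a1 asq P B1])
      have Seq: "S_avg x n k = esym a n k / real (n choose k)" for n k
        unfolding S_avg_def esym_def a_def by simp
      show "let T = (\<lambda>n::nat. root (nat \<lceil>c * real n\<rceil>) (S_avg x n (nat \<lceil>c * real n\<rceil>)))
      in ((\<lambda>n. \<bar>T n - T (Suc n)\<bar>) \<longlonglongrightarrow> 0) \<and>
         (\<lambda>n. \<bar>T n - T (Suc n)\<bar>) \<in> O(\<lambda>n. ln (real n) / real n)"
        unfolding Let_def Seq using D by simp
    qed
  qed
qed


end
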